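(* Let $D\ge 3$, let $n,p\ge 0$ with $n+p\ge 2$, and let $N_1,\dots,N_n,M_1,\dots,M_p\ge0$ be integers. For $P_a\in\mathcal{H}^{(D)}_{N_a}$ and $Q_b\in\mathcal{H}^{(D)}_{M_b}$ define $$I_{n,p}(P_1,\dots,P_n,\bar Q_1,\dots,\bar Q_p)=\int_{S^{D-1}}d\Omega(x)\,P_1(x)\cdots P_n(x)\,\bar Q_1(x)\cdots\bar Q_p(x),$$ where $d\Omega$ is the rotation-invariant probability measure on the unit sphere $S^{D-1}\subset\mathbb{R}^D$. Write the arguments as $F_1,\dots,F_{n+p}$ (so $F_a=P_a$ for $a\le n$ and $F_{n+b}=\bar Q_b$). Then $I_{n,p}$ is a simple intertwiner: for any two distinct positions $a\neq b$ in $\{1,\dots,n+p\}$ and all $i,j,k,l\in\{1,\dots,D\}$, $$\sum_{\text{antisym. over }(i,j,k,l)} I_{n,p}\big(F_1,\dots,X_{ij}\cdot F_a,\dots,X_{kl}\cdot F_b,\dots,F_{n+p}\big)=0,$$ i.e. $I_{n,p}(\dots,X_{[ij}\cdot F_a,\dots,X_{kl]}\cdot F_b,\dots)=0$, where $X_{ij}$ is applied in position $a$, $X_{kl}$ in position $b$, and all other arguments are unchanged.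
   Context: $\mathcal{H}^{(D)}_N$ is the space of complex-valued harmonic homogeneous polynomials of degree $N$ on $\mathbb{R}^D$, a representation of $\mathrm{SO}(D)$ via $(g\cdot P)(x)=P(g^{-1}x)$. The Lie algebra generators $X_{ij}$ of $\mathfrak{so}(D)$ act on functions on $\mathbb{R}^D$ (including the complex conjugates $\bar Q$) by the differential operators $X_{ij}\cdot f=x_i\,\partial f/\partial x_j-x_j\,\partial f/\partial x_i$. $[ijkl]$ denotes total antisymmetrization over the four indices. (The $P_a$ correspond to incoming and the $Q_b$ to outgoing edges at a vertex of an $\mathrm{SO}(D)$ spin network; the displayed condition is the quantum intersection constraint.) *)

theory Defs
  imports "HOL-Analysis.Analysis" "HOL-Combinatorics.Permutations"
begin

definition partial :: "'d::finite \<Rightarrow> (real^'d \<Rightarrow> complex) \<Rightarrow> real^'d \<Rightarrow> complex" where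
  "partial i f x = vector_derivative (\<lambda>t::real. f (x + t *\<^sub>R axis i 1)) (at 0)"

definition laplacian :: "(real^'d::finite \<Rightarrow> complex) \<Rightarrow> real^'d \<Rightarrow> complex" where
  "laplacian f x = (\<Sum>i\<in>UNIV. partial i (partial i f) x)"

definition hom_poly :: "nat \<Rightarrow> (real^'d::finite \<Rightarrow> complex) \<Rightarrow> bool" where
  "hom_poly N f \<longleftrightarrow> (\<exists>c :: ('d \<Rightarrow> nat) \<Rightarrow> complex.
      finite {\<alpha>. c \<alpha> \<noteq> 0} \<and> (\<forall>\<alpha>. c \<alpha> \<noteq> 0 \<longrightarrow> (\<Sum>i\<in>UNIV. \<alpha> i) = N) \<and>
      (\<forall>x. f x = (\<Sum>\<alpha>\<in>{\<alpha>. c \<alpha> \<noteq> 0}. c \<alpha> * (\<Prod>i\<in>UNIV. complex_of_real (x $ i) ^ \<alpha> i))))"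

definition harmonic_space :: "nat \<Rightarrow> (real^'d::finite \<Rightarrow> complex) set" where
  "harmonic_space N = {f. hom_poly N f \<and> (\<forall>x. laplacian f x = 0)}"

definition Xact :: "'d::finite \<Rightarrow> 'd \<Rightarrow> (real^'d \<Rightarrow> complex) \<Rightarrow> real^'d \<Rightarrow> complex" where
  "Xact i j f x = complex_of_real (x $ i) * partial j f x - complex_of_real (x $ j) * partial i f x"

definition rot_inv_sphere_prob :: "(real^'d::finite) measure \<Rightarrow> bool" where
  "rot_inv_sphere_prob \<mu> \<longleftrightarrow> sets \<mu> = sets borel \<and> emeasure \<mu> (space \<mu>) = 1 \<and>
     emeasure \<mu> (sphere 0 1) = 1 \<and>
     (\<forall>g. orthogonal_transformation g \<and> det (matrix g) = 1 \<longrightarrow> distr \<mu> borel g = \<mu>)"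

definition Iint :: "(real^'d::finite) measure \<Rightarrow> nat \<Rightarrow> (nat \<Rightarrow> real^'d \<Rightarrow> complex) \<Rightarrow> complex" where
  "Iint \<mu> m F = integral\<^sup>L \<mu> (\<lambda>x. \<Prod>a<m. F a x)"

end

theory Submission imports Defs "HOL-Probability.Probability_Measure" begin

inductive polyfun :: "(real^'d::finite \<Rightarrow> complex) \<Rightarrow> bool" where
  pconst: "polyfun (\<lambda>x. c)"
| pcoord: "polyfun (\<lambda>x. complex_of_real (x $ i))"
| padd: "polyfun f \<Longrightarrow> polyfun g \<Longrightarrow> polyfun (\<lambda>x. f x + g x)"
| pmult: "polyfun f \<Longrightarrow> polyfun g \<Longrightarrow> polyfun (\<lambda>x. f x * g x)"

lemma polyfun_sum: "finite S \<Longrightarrow> (\<And>s. s \<in> S \<Longrightarrow> polyfun (f s)) \<Longrightarrow> polyfun (\<lambda>x. \<Sum>s\<in>S. f s x)"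
  by (induction S rule: finite_induct) (auto intro: polyfun.intros)

lemma polyfun_prod: "finite S \<Longrightarrow> (\<And>s. s \<in> S \<Longrightarrow> polyfun (f s)) \<Longrightarrow> polyfun (\<lambda>x. \<Prod>s\<in>S. f s x)"
  by (induction S rule: finite_induct) (auto intro: polyfun.intros)

lemma polyfun_power: "polyfun f \<Longrightarrow> polyfun (\<lambda>x. f x ^ n)"
  by (induction n) (auto intro: polyfun.intros)

lemma polyfun_minus: "polyfun f \<Longrightarrow> polyfun g \<Longrightarrow> polyfun (\<lambda>x. f x - g x)"
proof -
  assume "polyfun f" "polyfun g"
  then have "polyfun (\<lambda>x. f x + (-1) * g x)" by (intro padd pmult pconst)
  moreover have "(\<lambda>x. f x + (-1) * g x) = (\<lambda>x. f x - g x)" by auto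
  ultimately show ?thesis by metis
qed

lemma hom_poly_polyfun: "hom_poly N (f :: real^'d::finite \<Rightarrow> complex) \<Longrightarrow> polyfun f"
proof -
  assume "hom_poly N f"
  then obtain c :: "('d \<Rightarrow> nat) \<Rightarrow> complex" where fin: "finite {\<alpha>. c \<alpha> \<noteq> 0}" and
    eq: "\<forall>x. f x = (\<Sum>\<alpha>\<in>{\<alpha>. c \<alpha> \<noteq> 0}. c \<alpha> * (\<Prod>i\<in>UNIV. complex_of_real (x $ i) ^ \<alpha> i))"
    unfolding hom_poly_def by blast
  have "polyfun (\<lambda>x. \<Sum>\<alpha>\<in>{\<alpha>. c \<alpha> \<noteq> 0}. c \<alpha> * (\<Prod>i\<in>UNIV. complex_of_real (x $ i) ^ \<alpha> i))"
    by (intro polyfun_sum fin pmult pconst polyfun_prod polyfun_power pcoord) auto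
  moreover have "f = (\<lambda>x. \<Sum>\<alpha>\<in>{\<alpha>. c \<alpha> \<noteq> 0}. c \<alpha> * (\<Prod>i\<in>UNIV. complex_of_real (x $ i) ^ \<alpha> i))"
    using eq by auto
  ultimately show ?thesis by simp
qed

lemma polyfun_cnj: "polyfun f \<Longrightarrow> polyfun (\<lambda>x. cnj (f x))"
  by (induction rule: polyfun.induct) (auto intro: polyfun.intros)

lemma polyfun_cont: "polyfun f \<Longrightarrow> continuous_on UNIV f"
  by (induction rule: polyfun.induct) (auto intro!: continuous_intros)

lemma polyfun_deriv: "polyfun f \<Longrightarrow> \<exists>g. polyfun g \<and>
   (\<forall>x. ((\<lambda>t::real. f (x + t *\<^sub>R axis i 1)) has_vector_derivative g x) (at 0))"
proof (induction rule: polyfun.induct)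
  case (pconst c)
  then show ?case by (intro exI[of _ "\<lambda>x. 0"]) (auto intro: polyfun.intros derivative_eq_intros)
next
  case (pcoord j)
  show ?case
  proof (intro exI[of _ "\<lambda>x. complex_of_real (axis i 1 $ j)"] conjI allI)
    show "polyfun (\<lambda>x::real^'a. complex_of_real (axis i 1 $ j))" by (rule pconst)
    fix x :: "real^'a"
    have "((\<lambda>t::real. complex_of_real (x $ j) + complex_of_real t * complex_of_real (axis i 1 $ j))
       has_vector_derivative complex_of_real (axis i 1 $ j)) (at 0)"
      unfolding has_vector_derivative_def
      by (auto intro!: derivative_eq_intros simp: scaleR_conv_of_real)
    then show "((\<lambda>t. complex_of_real ((x + t *\<^sub>R axis i 1) $ j)) has_vector_derivative
          complex_of_real (axis i 1 $ j)) (at 0)" by simp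
  qed
next
  case (padd f g)
  then obtain f' g' where "polyfun f'" "polyfun g'"
    "\<forall>x. ((\<lambda>t::real. f (x + t *\<^sub>R axis i 1)) has_vector_derivative f' x) (at 0)"
    "\<forall>x. ((\<lambda>t::real. g (x + t *\<^sub>R axis i 1)) has_vector_derivative g' x) (at 0)" by blast
  then show ?case
    by (intro exI[of _ "\<lambda>x. f' x + g' x"]) (auto intro: polyfun.intros has_vector_derivative_add)
next
  case (pmult f g)
  then obtain f' g' where "polyfun f'" "polyfun g'"
    "\<forall>x. ((\<lambda>t::real. f (x + t *\<^sub>R axis i 1)) has_vector_derivative f' x) (at 0)"
    "\<forall>x. ((\<lambda>t::real. g (x + t *\<^sub>R axis i 1)) has_vector_derivative g' x) (at 0)" by blast
  then show ?case
    by (intro exI[of _ "\<lambda>x. f x * g' x + f' x * g x"])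
      (auto intro!: polyfun.intros has_vector_derivative_mult[THEN has_vector_derivative_eq_rhs] \<open>polyfun f\<close> \<open>polyfun g\<close>)
qed

lemma polyfun_partial: "polyfun f \<Longrightarrow> polyfun (partial i f)"
proof -
  assume "polyfun f"
  then obtain g where g: "polyfun g" "\<forall>x. ((\<lambda>t::real. f (x + t *\<^sub>R axis i 1)) has_vector_derivative g x) (at 0)"
    using polyfun_deriv by blast
  have "partial i f = g"
    using g(2) by (auto simp: partial_def fun_eq_iff intro: vector_derivative_at)
  then show ?thesis using g by simp
qed

lemma polyfun_Xact: "polyfun f \<Longrightarrow> polyfun (Xact i j f)"
  unfolding Xact_def by (intro polyfun_minus pmult pcoord polyfun_partial)

lemma polyfun_integrable:
  fixes \<mu> :: "(real^'d::finite) measure"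
  assumes r: "rot_inv_sphere_prob \<mu>" and h: "polyfun h"
  shows "integrable \<mu> h"
proof -
  have sets: "sets \<mu> = sets borel" and sp1: "emeasure \<mu> (space \<mu>) = 1"
    and sph: "emeasure \<mu> (sphere 0 1) = 1" using r unfolding rot_inv_sphere_prob_def by auto
  interpret prob_space \<mu> using sp1 by (rule prob_spaceI)
  have "prob (sphere 0 1) = 1" using sph by (simp add: emeasure_eq_measure)
  then have ae: "AE x in \<mu>. x \<in> sphere 0 1" by (rule AE_prob_1)
  have cont: "continuous_on UNIV h" using h by (rule polyfun_cont)
  have "compact (h ` sphere 0 1)"
    by (rule compact_continuous_image[OF continuous_on_subset[OF cont]]) auto
  then obtain B where B: "\<forall>y\<in>h ` sphere 0 1. norm y \<le> B"
    using compact_imp_bounded bounded_iff by metis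
  have meas: "h \<in> borel_measurable \<mu>"
    using borel_measurable_continuous_onI[OF cont] measurable_cong_sets[OF sets refl] by blast
  show ?thesis
    by (rule integrable_const_bound[where B=B]) (use ae B meas in auto)
qed

lemma perm_alt_zero:
  fixes T :: "(nat \<Rightarrow> nat) \<Rightarrow> complex"
  assumes u: "u < 4" and w: "w < 4" and uw: "u \<noteq> w"
    and inv: "\<And>\<pi>. \<pi> permutes {..<4::nat} \<Longrightarrow> T (\<pi> \<circ> Transposition.transpose u w) = T \<pi>"
  shows "(\<Sum>\<pi> | \<pi> permutes {..<4::nat}. of_int (sign \<pi>) * T \<pi>) = 0"
proof -
  let ?t = "Transposition.transpose u w"
  have tp: "?t permutes {..<4::nat}" using u w by (intro permutes_swap_id) auto
  have "(\<Sum>\<pi> | \<pi> permutes {..<4::nat}. of_int (sign \<pi>) * T \<pi>) =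
        (\<Sum>\<pi> | \<pi> permutes {..<4::nat}. of_int (sign (\<pi> \<circ> ?t)) * T (\<pi> \<circ> ?t))"
    by (rule sum_permutations_compose_right[OF tp])
  also have "\<dots> = (\<Sum>\<pi> | \<pi> permutes {..<4::nat}. - (of_int (sign \<pi>) * T \<pi>))"
  proof (rule sum.cong[OF refl])
    fix \<pi> assume "\<pi> \<in> {\<pi>. \<pi> permutes {..<4::nat}}"
    then have p: "\<pi> permutes {..<4::nat}" by simp
    have "permutation \<pi>" using p by (auto simp: permutation_permutes)
    moreover have "permutation ?t" by (rule permutation_swap_id)
    ultimately have "sign (\<pi> \<circ> ?t) = - sign \<pi>"
      using uw by (simp add: sign_compose sign_swap_id)
    then show "of_int (sign (\<pi> \<circ> ?t)) * T (\<pi> \<circ> ?t) = - (of_int (sign \<pi>) * T \<pi>)"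
      using inv[OF p] by simp
  qed
  also have "\<dots> = - (\<Sum>\<pi> | \<pi> permutes {..<4::nat}. of_int (sign \<pi>) * T \<pi>)"
    by (simp add: sum_negf)
  finally show ?thesis by simp
qed

lemma key_alt:
  fixes c df dg :: "nat \<Rightarrow> complex"
  shows "(\<Sum>\<pi> | \<pi> permutes {..<4::nat}. of_int (sign \<pi>) *
     ((c (\<pi> 0) * df (\<pi> 1) - c (\<pi> 1) * df (\<pi> 0)) * (c (\<pi> 2) * dg (\<pi> 3) - c (\<pi> 3) * dg (\<pi> 2)))) = 0"
proof -
  define T1 where "T1 = (\<lambda>\<pi>::nat\<Rightarrow>nat. c (\<pi> 0) * df (\<pi> 1) * c (\<pi> 2) * dg (\<pi> 3))"
  define T2 where "T2 = (\<lambda>\<pi>::nat\<Rightarrow>nat. c (\<pi> 0) * df (\<pi> 1) * c (\<pi> 3) * dg (\<pi> 2))"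
  define T3 where "T3 = (\<lambda>\<pi>::nat\<Rightarrow>nat. c (\<pi> 1) * df (\<pi> 0) * c (\<pi> 2) * dg (\<pi> 3))"
  define T4 where "T4 = (\<lambda>\<pi>::nat\<Rightarrow>nat. c (\<pi> 1) * df (\<pi> 0) * c (\<pi> 3) * dg (\<pi> 2))"
  have z1: "(\<Sum>\<pi> | \<pi> permutes {..<4::nat}. of_int (sign \<pi>) * T1 \<pi>) = 0"
    by (rule perm_alt_zero[of 0 2]) (auto simp: T1_def Transposition.transpose_def)
  have z2: "(\<Sum>\<pi> | \<pi> permutes {..<4::nat}. of_int (sign \<pi>) * T2 \<pi>) = 0"
    by (rule perm_alt_zero[of 0 3]) (auto simp: T2_def Transposition.transpose_def)
  have z3: "(\<Sum>\<pi> | \<pi> permutes {..<4::nat}. of_int (sign \<pi>) * T3 \<pi>) = 0"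
    by (rule perm_alt_zero[of 1 2]) (auto simp: T3_def Transposition.transpose_def)
  have z4: "(\<Sum>\<pi> | \<pi> permutes {..<4::nat}. of_int (sign \<pi>) * T4 \<pi>) = 0"
    by (rule perm_alt_zero[of 1 3]) (auto simp: T4_def Transposition.transpose_def)
  have "(\<Sum>\<pi> | \<pi> permutes {..<4::nat}. of_int (sign \<pi>) *
     ((c (\<pi> 0) * df (\<pi> 1) - c (\<pi> 1) * df (\<pi> 0)) * (c (\<pi> 2) * dg (\<pi> 3) - c (\<pi> 3) * dg (\<pi> 2)))) =
     (\<Sum>\<pi> | \<pi> permutes {..<4::nat}. of_int (sign \<pi>) * T1 \<pi>) -
     (\<Sum>\<pi> | \<pi> permutes {..<4::nat}. of_int (sign \<pi>) * T2 \<pi>) -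
     (\<Sum>\<pi> | \<pi> permutes {..<4::nat}. of_int (sign \<pi>) * T3 \<pi>) +
     (\<Sum>\<pi> | \<pi> permutes {..<4::nat}. of_int (sign \<pi>) * T4 \<pi>)"
    by (simp add: sum_subtractf[symmetric] sum.distrib[symmetric] T1_def T2_def T3_def T4_def
        algebra_simps)
  then show ?thesis using z1 z2 z3 z4 by simp
qed

lemma prod_two:
  assumes "finite S" "a \<in> S" "b \<in> S" "a \<noteq> b"
  shows "prod f S = f a * f b * prod f (S - {a} - {b})"
  using assms by (simp add: prod.remove[of S a] prod.remove[of "S - {a}" b] mult.assoc)

theorem theorem3:
  fixes \<mu> :: "(real^'d::finite) measure"
    and n p :: nat
    and N M :: "nat \<Rightarrow> nat"
    and P Q :: "nat \<Rightarrow> real^'d \<Rightarrow> complex"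
    and a b :: nat
    and i j k l :: 'd
  assumes "CARD('d) \<ge> 3"
    and "n + p \<ge> 2"
    and "rot_inv_sphere_prob \<mu>"
    and "\<forall>c<n. P c \<in> harmonic_space (N c)"
    and "\<forall>c<p. Q c \<in> harmonic_space (M c)"
    and "a < n + p" and "b < n + p" and "a \<noteq> b"
  shows "let F = (\<lambda>c. if c < n then P c else (\<lambda>x. cnj (Q (c - n) x)));
             v = (\<lambda>m::nat. if m = 0 then i else if m = 1 then j else if m = 2 then k else l)
         in (\<Sum>\<pi> | \<pi> permutes {..<4::nat}.
               of_int (sign \<pi>) *
               Iint \<mu> (n + p) (F(a := Xact (v (\<pi> 0)) (v (\<pi> 1)) (F a),
                                 b := Xact (v (\<pi> 2)) (v (\<pi> 3)) (F b)))) = 0"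
proof -
  define F where "F = (\<lambda>c. if c < n then P c else (\<lambda>x. cnj (Q (c - n) x)))"
  define v where "v = (\<lambda>m::nat. if m = 0 then i else if m = 1 then j else if m = 2 then k else l)"
  define G where "G = (\<lambda>\<pi>::nat\<Rightarrow>nat. F(a := Xact (v (\<pi> 0)) (v (\<pi> 1)) (F a),
                                 b := Xact (v (\<pi> 2)) (v (\<pi> 3)) (F b)))"
  let ?m = "n + p"
  have polyF: "polyfun (F c)" if "c < ?m" for c
  proof (cases "c < n")
    case True
    then show ?thesis using assms(4) by (auto simp: F_def harmonic_space_def intro: hom_poly_polyfun)
  next
    case False
    then have "c - n < p" using that by auto
    then have "polyfun (Q (c - n))" using assms(5) by (auto simp: harmonic_space_def intro: hom_poly_polyfun)
    then show ?thesis using False by (simp add: F_def polyfun_cnj)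
  qed
  have polyG: "polyfun (G \<pi> c)" if "c < ?m" for \<pi> c
    using polyF[OF that] polyF[OF assms(6)] polyF[OF assms(7)]
    by (auto simp: G_def intro: polyfun_Xact)
  have int: "integrable \<mu> (\<lambda>x. \<Prod>c<?m. G \<pi> c x)" for \<pi>
    by (rule polyfun_integrable[OF assms(3)]) (auto intro: polyfun_prod polyG)
  have pw: "(\<Sum>\<pi> | \<pi> permutes {..<4::nat}. of_int (sign \<pi>) * (\<Prod>c<?m. G \<pi> c x)) = 0" for x
  proof -
    define R where "R = (\<Prod>c\<in>{..<?m} - {a} - {b}. F c x)"
    define cc where "cc = (\<lambda>m. complex_of_real (x $ v m))"
    define df where "df = (\<lambda>m. partial (v m) (F a) x)"
    define dg where "dg = (\<lambda>m. partial (v m) (F b) x)"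
    have e1: "(\<Prod>c<?m. G \<pi> c x) = G \<pi> a x * G \<pi> b x * (\<Prod>c\<in>{..<?m} - {a} - {b}. G \<pi> c x)" for \<pi>
      by (rule prod_two) (use assms(6-8) in auto)
    have e2: "(\<Prod>c\<in>{..<?m} - {a} - {b}. G \<pi> c x) = R" for \<pi>
      unfolding R_def by (rule prod.cong) (auto simp: G_def)
    have e: "(\<Prod>c<?m. G \<pi> c x) = R *
       ((cc (\<pi> 0) * df (\<pi> 1) - cc (\<pi> 1) * df (\<pi> 0)) * (cc (\<pi> 2) * dg (\<pi> 3) - cc (\<pi> 3) * dg (\<pi> 2)))" for \<pi>
      unfolding e1 e2 using assms(8) by (simp add: G_def Xact_def cc_def df_def dg_def)
    have "(\<Sum>\<pi> | \<pi> permutes {..<4::nat}. of_int (sign \<pi>) * (\<Prod>c<?m. G \<pi> c x)) =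
      R * (\<Sum>\<pi> | \<pi> permutes {..<4::nat}. of_int (sign \<pi>) *
     ((cc (\<pi> 0) * df (\<pi> 1) - cc (\<pi> 1) * df (\<pi> 0)) * (cc (\<pi> 2) * dg (\<pi> 3) - cc (\<pi> 3) * dg (\<pi> 2))))"
      by (simp add: e sum_distrib_left mult.left_commute)
    then show ?thesis using key_alt[of cc df dg] by (metis mult_zero_right)
  qed
  have "(\<Sum>\<pi> | \<pi> permutes {..<4::nat}. of_int (sign \<pi>) * Iint \<mu> ?m (G \<pi>)) =
     integral\<^sup>L \<mu> (\<lambda>x. \<Sum>\<pi> | \<pi> permutes {..<4::nat}. of_int (sign \<pi>) * (\<Prod>c<?m. G \<pi> c x))"
  proof -
    have "integral\<^sup>L \<mu> (\<lambda>x. \<Sum>\<pi> | \<pi> permutes {..<4::nat}. of_int (sign \<pi>) * (\<Prod>c<?m. G \<pi> c x)) =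
       (\<Sum>\<pi> | \<pi> permutes {..<4::nat}. integral\<^sup>L \<mu> (\<lambda>x. of_int (sign \<pi>) * (\<Prod>c<?m. G \<pi> c x)))"
      by (rule Bochner_Integration.integral_sum) (auto intro: int)
    then show ?thesis unfolding Iint_def by simp
  qed
  also have "\<dots> = 0" by (simp add: pw)
  finally show ?thesis unfolding Let_def F_def[symmetric] v_def[symmetric] by (simp add: G_def)
qed

end
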